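(* Let $K\ge 1$ and let $R_1,\dots,R_K>0$ be pairwise distinct. Let $c>\max\{R_1\ln 2,\dots,R_K\ln 2\}$ and $$g_K(R_1,\dots,R_K)=\frac{1}{2\pi \mathrm{i}}\int_{c-\mathrm{i}\infty}^{c+\mathrm{i}\infty}\frac{e^{s}}{s\prod_{k=1}^{K}\left(\frac{s}{R_k\ln 2}-1\right)}\,ds .$$ Then $$g_K(R_1,\dots,R_K)=(-1)^K+\frac{\det(\mathbf A)}{\det(\mathbf B)},$$ where $\mathbf A$ is the $K\times K$ matrix whose $k$-th row is $(R_k,R_k^2,\dots,R_k^{K-1},2^{R_k})$ and $\mathbf B$ is the $K\times K$ Vandermonde matrix whose $k$-th row is $(1,R_k,R_k^2,\dots,R_k^{K-1})$.
   Context: Here $\mathrm{i}=\sqrt{-1}$. In the paper this yields the closed form $p_{out\_asy,K}=\pi^K f_{\mathbf h}(\mathbf 0)\prod_{k=1}^K\frac{\mathcal N_0}{P_k}\left((-1)^K+\det(\mathbf A)/\det(\mathbf B)\right)$ for the asymptotic outage probability of variable-rate HARQ-IR, where $f_{\mathbf h}(\mathbf 0)$, $P_k$, $\mathcal N_0$ are positive constants. *)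

theory Defs
  imports "HOL-Complex_Analysis.Complex_Analysis" "Jordan_Normal_Form.Determinant"
begin

definition gK_integrand :: "nat \<Rightarrow> (nat \<Rightarrow> real) \<Rightarrow> complex \<Rightarrow> complex" where
  "gK_integrand K R s =
     exp s / (s * (\<Prod>k<K. s / complex_of_real (R k * ln 2) - 1))"

definition matA :: "nat \<Rightarrow> (nat \<Rightarrow> real) \<Rightarrow> real mat" where
  "matA K R = mat K K (\<lambda>(k, j). if j = K - 1 then 2 powr R k else R k ^ (j + 1))"

definition matB :: "nat \<Rightarrow> (nat \<Rightarrow> real) \<Rightarrow> real mat" where
  "matB K R = mat K K (\<lambda>(k, j). R k ^ j)"

end

theory Submission
  imports Defs "HOL-Real_Asymp.Real_Asymp"
begin


lemma poly_lt_sum: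
  fixes p :: "real poly"
  assumes "degree p < K"
  shows "poly p t = (\<Sum>i<K. coeff p i * t ^ i)"
proof -
  have "poly p t = (\<Sum>i\<le>degree p. coeff p i * t ^ i)" by (rule poly_altdef)
  also have "\<dots> = (\<Sum>i<K. coeff p i * t ^ i)"
    by (rule sum.mono_neutral_left) (use assms in \<open>auto simp: coeff_eq_0\<close>)
  finally show ?thesis .
qed

lemma matB_det_nz:
  assumes inj: "inj_on R {..<K}"
  shows "det (matB K R) \<noteq> 0"
proof
  assume "det (matB K R) = 0"
  then obtain v where v: "v \<in> carrier_vec K" "v \<noteq> 0\<^sub>v K" "matB K R *\<^sub>v v = 0\<^sub>v K"
    using det_0_iff_vec_prod_zero_field[of "matB K R" K] by (auto simp: matB_def)
  define p where "p = (\<Sum>i<K. monom (v $ i) i)"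
  have coeffp: "coeff p i = (if i < K then v $ i else 0)" for i
    unfolding p_def coeff_sum coeff_monom by (auto)
  have roots: "poly p (R k) = 0" if "k < K" for k
  proof -
    have "(matB K R *\<^sub>v v) $ k = 0" using v that by simp
    then have "(\<Sum>i\<in>{0..<K}. R k ^ i * v $ i) = 0"
      using v that by (simp add: matB_def mult_mat_vec_def scalar_prod_def)
    moreover have "poly p (R k) = (\<Sum>i<K. v $ i * R k ^ i)"
      unfolding p_def poly_sum poly_monom by simp
    ultimately show ?thesis by (simp add: lessThan_atLeast0 mult.commute)
  qed
  have "p \<noteq> 0"
  proof
    assume "p = 0"
    then have "v $ i = 0" if "i < K" for i using coeffp[of i] that by simp
    then have "v = 0\<^sub>v K" using v(1) by (intro eq_vecI) auto
    with v(2) show False by simp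
  qed
  have degp: "degree p < K \<or> K = 0"
  proof (cases K)
    case (Suc n)
    have "degree p \<le> n" unfolding p_def
      by (rule degree_sum_le) (use Suc in \<open>auto intro: order.trans[OF degree_monom_le]\<close>)
    then show ?thesis using Suc by simp
  qed simp
  have "R ` {..<K} \<subseteq> {x. poly p x = 0}" using roots by auto
  then have "card (R ` {..<K}) \<le> card {x. poly p x = 0}"
    by (intro card_mono poly_roots_finite) (use \<open>p \<noteq> 0\<close> in auto)
  also have "\<dots> \<le> degree p" by (rule card_poly_roots_bound) fact
  finally have "K \<le> degree p" using card_image[OF inj] by simp
  with degp have "K = 0" by simp
  then show False using v by auto
qed



lemma detA_div_detB:
  assumes K1: "K \<ge> 1" and inj: "inj_on R {..<K}"
  shows "det (matA K R) / det (matB K R) =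
         (\<Sum>k<K. 2 powr R k * (\<Prod>j\<in>{..<K}-{k}. R j / (R k - R j)))"
proof -
  define w where "w k = 2 powr R k / (\<Prod>j\<in>{..<K}-{k}. (R k - R j))" for k
  define P where "P = (\<Sum>k<K. Polynomial.smult (w k) (\<Prod>j\<in>{..<K}-{k}. [:-R j, 1:]))"
  have polyP: "poly P t = (\<Sum>k<K. w k * (\<Prod>j\<in>{..<K}-{k}. (t - R j)))" for t
    unfolding P_def by (simp add: poly_sum poly_prod)
  have nz: "(\<Prod>j\<in>{..<K}-{k}. (R k - R j)) \<noteq> 0" if "k < K" for k
    using inj that by (auto simp: inj_on_def)
  have polyPR: "poly P (R m) = 2 powr R m" if m: "m < K" for m
  proof -
    have "poly P (R m) = (\<Sum>k\<in>{m}. w k * (\<Prod>j\<in>{..<K}-{k}. (R m - R j)))"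
      unfolding polyP
      by (rule sum.mono_neutral_right) (use m in \<open>auto\<close>)
    also have "\<dots> = 2 powr R m" using nz[OF m] by (simp add: w_def)
    finally show ?thesis .
  qed
  have degP: "degree P < K"
  proof -
    have "degree P \<le> K - 1" unfolding P_def
    proof (rule degree_sum_le)
      fix k assume k: "k \<in> {..<K}"
      have "degree (\<Prod>j\<in>{..<K}-{k}. [:-R j, 1:]) \<le> (\<Sum>j\<in>{..<K}-{k}. degree [:-R j, 1:])"
        using degree_prod_sum_le[of "{..<K}-{k}" "\<lambda>j. [:-R j, 1:]"] by (simp add: o_def)
      also have "\<dots> = K - 1" using k by simp
      finally show "degree (Polynomial.smult (w k) (\<Prod>j\<in>{..<K}-{k}. [:-R j, 1:])) \<le> K - 1"
        using degree_smult_le order.trans by blast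
    qed auto
    then show ?thesis using K1 by simp
  qed
  define x where "x i = coeff P i" for i
  define M where "M = mat K K (\<lambda>(i,j). if j = K-1 then x i else if i = j+1 then 1 else (0::real))"
  have M: "M \<in> carrier_mat K K" by (simp add: M_def)
  have B: "matB K R \<in> carrier_mat K K" by (simp add: matB_def)
  have AM: "matA K R = matB K R * M"
  proof (rule eq_matI)
    fix k j assume k: "k < dim_row (matB K R * M)" and j: "j < dim_col (matB K R * M)"
    then have k: "k < K" and j: "j < K" using M B by auto
    have "(matB K R * M) $$ (k, j) = (\<Sum>l\<in>{0..<K}. R k ^ l * M $$ (l, j))"
      using k j M B by (simp add: matB_def scalar_prod_def)
    also have "\<dots> = matA K R $$ (k, j)"
    proof (cases "j = K - 1")
      case True
      have "(\<Sum>l\<in>{0..<K}. R k ^ l * M $$ (l, j)) = (\<Sum>l<K. coeff P l * R k ^ l)"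
        using True by (auto simp: M_def x_def lessThan_atLeast0 mult.commute intro!: sum.cong)
      also have "\<dots> = poly P (R k)" using poly_lt_sum[OF degP] by simp
      also have "\<dots> = 2 powr R k" by (rule polyPR[OF k])
      finally show ?thesis using True k j by (simp add: matA_def)
    next
      case False
      have "(\<Sum>l\<in>{0..<K}. R k ^ l * M $$ (l, j)) = (\<Sum>l\<in>{j+1}. R k ^ l)"
        using False j by (intro sum.mono_neutral_cong_right) (auto simp: M_def)
      then show ?thesis using False k j by (simp add: matA_def)
    qed
    finally show "matA K R $$ (k, j) = (matB K R * M) $$ (k, j)" by simp
  qed (use M B in \<open>auto simp: matA_def\<close>)
  have detM: "det M = (-1)^(K-1) * x 0"
  proof -
    have "det M = (\<Sum>j<K. M $$ (0,j) * cofactor M 0 j)"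
      by (rule laplace_expansion_row[OF M]) (use K1 in auto)
    also have "\<dots> = (\<Sum>j\<in>{K-1}. M $$ (0,j) * cofactor M 0 j)"
      by (rule sum.mono_neutral_right) (use K1 in \<open>auto simp: M_def\<close>)
    also have "mat_delete M 0 (K-1) = 1\<^sub>m (K-1)"
      by (rule eq_matI) (auto simp: mat_delete_def M_def)
    then have "(\<Sum>j\<in>{K-1}. M $$ (0,j) * cofactor M 0 j) = x 0 * (-1)^(K-1)"
      using K1 by (simp add: cofactor_def M_def)
    finally show ?thesis by simp
  qed
  have "det (matA K R) / det (matB K R) = det M"
    using matB_det_nz[OF inj] by (simp add: AM det_mult[OF B M])
  moreover have "x 0 = poly P 0" by (simp add: x_def poly_0_coeff_0)
  moreover have "poly P 0 = (\<Sum>k<K. w k * (\<Prod>j\<in>{..<K}-{k}. - R j))" by (simp add: polyP)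
  ultimately have "det (matA K R) / det (matB K R) = (\<Sum>k<K. (-1)^(K-1) * (w k * (\<Prod>j\<in>{..<K}-{k}. - R j)))"
    using detM by (simp add: sum_distrib_left)
  also have "\<dots> = (\<Sum>k<K. 2 powr R k * (\<Prod>j\<in>{..<K}-{k}. R j / (R k - R j)))"
  proof (rule sum.cong)
    fix k assume k: "k \<in> {..<K}"
    have "(\<Prod>j\<in>{..<K}-{k}. - R j) = (\<Prod>j\<in>{..<K}-{k}. (-1) * R j)" by simp
    also have "\<dots> = (-1)^(K-1) * (\<Prod>j\<in>{..<K}-{k}. R j)"
      using k by (subst prod.distrib) simp
    finally have "(-1::real)^(K-1) * (\<Prod>j\<in>{..<K}-{k}. - R j) = (\<Prod>j\<in>{..<K}-{k}. R j)"
      by (simp flip: power_mult_distrib)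
    then show "(-1)^(K-1) * (w k * (\<Prod>j\<in>{..<K}-{k}. - R j)) =
               2 powr R k * (\<Prod>j\<in>{..<K}-{k}. R j / (R k - R j))"
      by (simp add: w_def prod_dividef)
  qed simp
  finally show ?thesis .
qed



lemma gK_holo:
  assumes pos: "\<And>k. k < K \<Longrightarrow> R k > 0"
  shows "gK_integrand K R holomorphic_on (UNIV - insert 0 ((\<lambda>k. complex_of_real (R k * ln 2)) ` {..<K}))"
proof -
  have nz: "s * (\<Prod>k<K. s / complex_of_real (R k * ln 2) - 1) \<noteq> 0"
    if s: "s \<notin> insert 0 ((\<lambda>k. complex_of_real (R k * ln 2)) ` {..<K})" for s
  proof -
    have "s / complex_of_real (R k * ln 2) - 1 \<noteq> 0" if k: "k < K" for k
    proof
      assume "s / complex_of_real (R k * ln 2) - 1 = 0"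
      moreover have "complex_of_real (R k * ln 2) \<noteq> 0" using pos[OF k] by simp
      ultimately have "s = complex_of_real (R k * ln 2)" by (simp add: field_simps)
      with s k show False by auto
    qed
    then show ?thesis using s by auto
  qed
  show ?thesis unfolding gK_integrand_def[abs_def]
    using nz by (intro holomorphic_intros) auto
qed

lemma residue_at_0:
  assumes pos: "\<And>k. k < K \<Longrightarrow> R k > 0"
  shows "residue (gK_integrand K R) 0 = (-1)^K"
proof -
  define S where "S = UNIV - (\<lambda>k. complex_of_real (R k * ln 2)) ` {..<K}"
  define G where "G w = exp w / (\<Prod>k<K. w / complex_of_real (R k * ln 2) - 1)" for w
  have eq: "gK_integrand K R = (\<lambda>w. G w / (w - 0))"
    by (auto simp: gK_integrand_def G_def fun_eq_iff)
  have "open S" unfolding S_def by (intro open_Diff finite_imp_closed) auto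
  moreover have "0 \<in> S" unfolding S_def using pos by (auto simp: image_iff dest: pos)
  moreover have "G holomorphic_on S"
  proof -
    have "w / complex_of_real (R k * ln 2) - 1 \<noteq> 0" if "w \<in> S" "k < K" for w k
    proof
      assume "w / complex_of_real (R k * ln 2) - 1 = 0"
      moreover have "complex_of_real (R k * ln 2) \<noteq> 0" using pos[OF \<open>k < K\<close>] by simp
      ultimately have "w = complex_of_real (R k * ln 2)" by (simp add: field_simps)
      with that show False unfolding S_def by auto
    qed
    then show ?thesis unfolding G_def[abs_def] by (intro holomorphic_intros) auto
  qed
  ultimately have "residue (\<lambda>w. G w / (w - 0)) 0 = G 0" by (rule residue_simple)
  also have "G 0 = (-1)^K" by (cases "even K") (simp_all add: G_def)
  finally show ?thesis using eq by simp
qed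

lemma residue_at_pole:
  assumes pos: "\<And>k. k < K \<Longrightarrow> R k > 0" and inj: "inj_on R {..<K}" and m: "m < K"
  shows "residue (gK_integrand K R) (complex_of_real (R m * ln 2)) =
     complex_of_real (2 powr R m * (\<Prod>j\<in>{..<K}-{m}. R j / (R m - R j)))"
proof -
  define a where "a k = complex_of_real (R k * ln 2)" for k
  have anz: "a k \<noteq> 0" if "k < K" for k using pos[OF that] by (simp add: a_def)
  define S where "S = UNIV - insert 0 (a ` ({..<K}-{m}))"
  define G where "G w = a m * exp w / (w * (\<Prod>k\<in>{..<K}-{m}. w / a k - 1))" for w
  have eq: "gK_integrand K R = (\<lambda>w. G w / (w - a m))"
  proof
    fix w
    have "(\<Prod>k<K. w / a k - 1) = (w / a m - 1) * (\<Prod>k\<in>{..<K}-{m}. w / a k - 1)"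
      using m by (subst prod.remove[of _ m]) auto
    also have "w / a m - 1 = (w - a m) / a m" using anz[OF m] by (simp add: field_simps)
    finally show "gK_integrand K R w = G w / (w - a m)"
      unfolding gK_integrand_def G_def a_def[symmetric]
      by (simp add: divide_inverse inverse_mult_distrib)
  qed
  have "open S" unfolding S_def by (intro open_Diff finite_imp_closed) auto
  moreover have "a m \<in> S" unfolding S_def using anz[OF m] inj m
    by (auto simp: a_def inj_on_def)
  moreover have "G holomorphic_on S"
  proof -
    have "w / a k - 1 \<noteq> 0" if "w \<in> S" "k \<in> {..<K}-{m}" for w k
    proof
      assume "w / a k - 1 = 0"
      then have "w = a k" using anz that by (auto simp: field_simps)
      with that show False unfolding S_def by auto
    qed
    moreover have "w \<noteq> 0" if "w \<in> S" for w using that by (auto simp: S_def)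
    ultimately show ?thesis unfolding G_def[abs_def] by (intro holomorphic_intros) auto
  qed
  ultimately have "residue (\<lambda>w. G w / (w - a m)) (a m) = G (a m)" by (rule residue_simple)
  also have "G (a m) = complex_of_real (exp (R m * ln 2) / (\<Prod>k\<in>{..<K}-{m}. (R m * ln 2) / (R k * ln 2) - 1))"
  proof -
    have ea: "exp (a m) = of_real (exp (R m * ln 2))" unfolding a_def by (rule exp_of_real)
    have pa: "(\<Prod>k\<in>{..<K}-{m}. a m / a k - 1) = of_real (\<Prod>k\<in>{..<K}-{m}. (R m * ln 2) / (R k * ln 2) - 1)"
      unfolding a_def by simp
    show ?thesis using anz[OF m] unfolding G_def ea pa by simp
  qed
  also have "exp (R m * ln 2) = 2 powr R m" by (simp add: powr_def)
  also have "(\<Prod>k\<in>{..<K}-{m}. (R m * ln 2) / (R k * ln 2) - 1) = (\<Prod>k\<in>{..<K}-{m}. (R m - R k) / R k)"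
  proof (rule prod.cong)
    fix k assume "k \<in> {..<K}-{m}"
    then have "R k > 0" using pos by auto
    then show "(R m * ln 2) / (R k * ln 2) - 1 = (R m - R k) / R k" by (simp add: field_simps)
  qed simp
  also have "2 powr R m / \<dots> = 2 powr R m * (\<Prod>j\<in>{..<K}-{m}. R j / (R m - R j))"
    by (simp add: prod_dividef)
  finally show ?thesis using eq by (simp add: a_def)
qed



lemma exp_angles:
  "exp (\<i> * complex_of_real (pi/2)) = \<i>"
  "exp (\<i> * complex_of_real (3/2*pi)) = -\<i>"
  "exp (\<i> * complex_of_real (2*pi)) = 1"
  "exp (\<i> * complex_of_real 0) = 1"
  unfolding cis_conv_exp[symmetric] using cos_3over2_pi sin_3over2_pi by (simp_all add: complex_eq_iff)

lemma line_circle: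
  fixes f :: "complex \<Rightarrow> complex" and c T m :: real
  assumes holo: "f holomorphic_on {s. Re s > m}" and mc: "m < c" and T: "T > 0"
    and ci: "f contour_integrable_on circlepath c T"
  shows "contour_integral (linepath (complex_of_real c - \<i> * complex_of_real T)
                                   (complex_of_real c + \<i> * complex_of_real T)) f
       = contour_integral (circlepath c T) f - contour_integral (part_circlepath c T (pi/2) (3/2*pi)) f"
proof -
  define H where "H = {s. Re s > m}"
  define L where "L = linepath (complex_of_real c - \<i> * complex_of_real T) (complex_of_real c + \<i> * complex_of_real T)"
  define A1 where "A1 = part_circlepath c T 0 (pi/2)"
  define A4 where "A4 = part_circlepath c T (3/2*pi) (2*pi)"
  have oH: "open H" and cH: "convex H" unfolding H_def
    by (auto intro: open_halfspace_Re_gt convex_halfspace_Re_gt)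
  have hH: "f holomorphic_on H" using holo by (simp add: H_def)
  have pL: "path_image L \<subseteq> H" unfolding L_def path_image_linepath
    by (rule closed_segment_subset) (use mc cH in \<open>auto simp: H_def\<close>)
  have pA1: "path_image A1 \<subseteq> H"
  proof
    fix z assume "z \<in> path_image A1"
    then obtain x where x: "x \<in> {0..pi/2}" and z: "z = c + T * cis x"
      unfolding A1_def path_image_part_circlepath' by (auto simp: closed_segment_eq_real_ivl)
    have "cos x \<ge> 0" using x by (intro cos_ge_zero) auto
    then have "Re z \<ge> c" using T z by simp
    then show "z \<in> H" using mc by (simp add: H_def)
  qed
  have pA4: "path_image A4 \<subseteq> H"
  proof
    fix z assume "z \<in> path_image A4"
    then obtain x where x: "x \<in> {3/2*pi..2*pi}" and z: "z = c + T * cis x"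
      unfolding A4_def path_image_part_circlepath' by (auto simp: closed_segment_eq_real_ivl)
    have "cos (x - 2*pi) \<ge> 0" using x by (intro cos_ge_zero) auto
    then have "cos x \<ge> 0" by (simp add: cos_diff)
    then have "Re z \<ge> c" using T z by simp
    then show "z \<in> H" using mc by (simp add: H_def)
  qed
  have iL: "f contour_integrable_on L"
    by (rule contour_integrable_holomorphic_simple[OF hH oH]) (use pL in \<open>auto simp: L_def\<close>)
  have iA1: "f contour_integrable_on A1"
    by (rule contour_integrable_holomorphic_simple[OF hH oH]) (use pA1 in \<open>auto simp: A1_def\<close>)
  have iA4: "f contour_integrable_on A4"
    by (rule contour_integrable_holomorphic_simple[OF hH oH]) (use pA4 in \<open>auto simp: A4_def\<close>)
  define G where "G = L +++ (reversepath A1 +++ reversepath A4)"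
  have A1s: "pathstart A1 = c + T" and A1f: "pathfinish A1 = c + \<i> * T"
    unfolding A1_def pathstart_part_circlepath pathfinish_part_circlepath exp_angles by simp_all
  have A4s: "pathstart A4 = c - \<i> * T" and A4f: "pathfinish A4 = c + T"
    unfolding A4_def pathstart_part_circlepath pathfinish_part_circlepath exp_angles by simp_all
  have vL: "valid_path L" and vA1: "valid_path A1" and vA4: "valid_path A4"
    unfolding L_def A1_def A4_def by (rule valid_path_linepath valid_path_part_circlepath)+
  have vG: "valid_path G" unfolding G_def
    using vL vA1 vA4 A1s A1f A4s A4f
    by (intro valid_path_join valid_path_reversepath) (simp_all add: L_def)
  have cG: "pathfinish G = pathstart G" unfolding G_def
    using A1s A1f A4s A4f by (simp add: L_def)
  have "path_image G \<subseteq> path_image L \<union> path_image (reversepath A1 +++ reversepath A4)"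
    unfolding G_def by (rule path_image_join_subset)
  also have "path_image (reversepath A1 +++ reversepath A4) \<subseteq> path_image A1 \<union> path_image A4"
    using path_image_join_subset[of "reversepath A1" "reversepath A4"] by (simp add: path_image_reversepath)
  finally have pG: "path_image G \<subseteq> H" using pL pA1 pA4 by blast
  have "(f has_contour_integral 0) G"
    by (rule Cauchy_theorem_convex_simple[OF hH cH vG pG cG])
  then have "contour_integral G f = 0" by (rule contour_integral_unique)
  moreover have "contour_integral G f = contour_integral L f - contour_integral A1 f - contour_integral A4 f"
    unfolding G_def using iL iA1 iA4
    by (simp add: contour_integral_reversepath contour_integrable_reversepath
          valid_path_join vL vA1 vA4 A1s A1f A4s A4f)
  ultimately have Leq: "contour_integral L f = contour_integral A1 f + contour_integral A4 f" by (simp add: algebra_simps)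
  define \<phi> where "\<phi> t = f (c + T * cis t) * T * \<i> * cis t" for t
  have int: "\<phi> integrable_on {0..2*pi}"
    using ci unfolding circlepath_def \<phi>_def by (simp add: contour_integrable_part_circlepath_iff)
  have int2: "\<phi> integrable_on {0..3/2*pi}"
    by (rule integrable_subinterval_real[OF int]) auto
  have e1: "contour_integral A1 f = integral {0..pi/2} \<phi>"
    unfolding A1_def \<phi>_def by (rule contour_integral_part_circlepath_eq) simp
  have e4: "contour_integral A4 f = integral {3/2*pi..2*pi} \<phi>"
    unfolding A4_def \<phi>_def by (rule contour_integral_part_circlepath_eq) simp
  have e2: "contour_integral (part_circlepath c T (pi/2) (3/2*pi)) f = integral {pi/2..3/2*pi} \<phi>"
    unfolding \<phi>_def by (rule contour_integral_part_circlepath_eq) simp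
  have ec: "contour_integral (circlepath c T) f = integral {0..2*pi} \<phi>"
    unfolding \<phi>_def circlepath_def by (rule contour_integral_part_circlepath_eq) simp
  have s1: "integral {0..2*pi} \<phi> = integral {0..3/2*pi} \<phi> + integral {3/2*pi..2*pi} \<phi>"
    by (rule Henstock_Kurzweil_Integration.integral_combine[symmetric, OF _ _ int]) auto
  have s2: "integral {0..3/2*pi} \<phi> = integral {0..pi/2} \<phi> + integral {pi/2..3/2*pi} \<phi>"
    by (rule Henstock_Kurzweil_Integration.integral_combine[symmetric, OF _ _ int2]) auto
  have "contour_integral L f = contour_integral (circlepath c T) f - contour_integral (part_circlepath c T (pi/2) (3/2*pi)) f"
    unfolding Leq e1 e2 e4 ec s1 s2 by simp
  then show ?thesis by (simp only: L_def)
qed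



lemma residue_sum:
  assumes pos: "\<And>k. k < K \<Longrightarrow> R k > 0" and inj: "inj_on R {..<K}"
  shows "(\<Sum>p\<in>insert 0 ((\<lambda>k. complex_of_real (R k * ln 2)) ` {..<K}). residue (gK_integrand K R) p)
       = complex_of_real ((-1)^K + (\<Sum>k<K. 2 powr R k * (\<Prod>j\<in>{..<K}-{k}. R j / (R k - R j))))"
proof -
  have inj2: "inj_on (\<lambda>k. complex_of_real (R k * ln 2)) {..<K}"
    using inj by (auto simp: inj_on_def)
  have n0: "0 \<notin> (\<lambda>k. complex_of_real (R k * ln 2)) ` {..<K}"
    using pos by (auto dest: pos)
  have "(\<Sum>p\<in>insert 0 ((\<lambda>k. complex_of_real (R k * ln 2)) ` {..<K}). residue (gK_integrand K R) p)
      = residue (gK_integrand K R) 0 + (\<Sum>k<K. residue (gK_integrand K R) (complex_of_real (R k * ln 2)))"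
  proof -
    have "(\<Sum>p\<in>(\<lambda>k. complex_of_real (R k * ln 2)) ` {..<K}. residue (gK_integrand K R) p)
        = (\<Sum>k<K. residue (gK_integrand K R) (complex_of_real (R k * ln 2)))"
      by (simp only: sum.reindex[OF inj2] o_def)
    then show ?thesis using n0 by (subst sum.insert) auto
  qed
  also have "\<dots> = (-1)^K + (\<Sum>k<K. complex_of_real (2 powr R k * (\<Prod>j\<in>{..<K}-{k}. R j / (R k - R j))))"
    using residue_at_0[OF pos] residue_at_pole[OF pos inj] by simp
  finally show ?thesis by simp
qed

lemma arc_bound:
  fixes c T :: real
  assumes pos: "\<And>k. k < K \<Longrightarrow> R k > 0" and K1: "K \<ge> 1"
    and lt: "\<And>k. k < K \<Longrightarrow> c > R k * ln 2" and c: "c > 0" and T: "T \<ge> 2 * c"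
    and ci: "gK_integrand K R contour_integrable_on part_circlepath c T (pi/2) (3/2*pi)"
  shows "norm (contour_integral (part_circlepath c T (pi/2) (3/2*pi)) (gK_integrand K R))
           \<le> 4 * c * exp c / T^2 * T * (3/2*pi - pi/2)"
proof (rule has_contour_integral_bound_part_circlepath)
  show "(gK_integrand K R has_contour_integral contour_integral (part_circlepath c T (pi/2) (3/2*pi)) (gK_integrand K R))
          (part_circlepath c T (pi/2) (3/2*pi))"
    using ci by (rule has_contour_integral_integral)
  show "0 \<le> 4 * c * exp c / T^2" using c by simp
  show "0 < T" using c T by simp
  show "pi/2 \<le> 3/2*pi" by simp
  fix z assume "z \<in> path_image (part_circlepath c T (pi/2) (3/2*pi))"
  then obtain x where x: "x \<in> {pi/2..3/2*pi}" and z: "z = c + T * cis x"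
    unfolding path_image_part_circlepath' by (auto simp: closed_segment_eq_real_ivl)
  have "cos (x - pi) \<ge> 0" using x by (intro cos_ge_zero) auto
  then have "cos x \<le> 0" by (simp add: cos_diff)
  then have Rez: "Re z \<le> c" using T c z by (simp add: mult_nonneg_nonpos)
  have Tpos: "T > 0" using c T by simp
  have dz: "norm (z - c) = T" using Tpos z by (simp add: norm_mult)
  define q where "q = T / (2 * c)"
  have q1: "q \<ge> 1" using T c by (simp add: q_def field_simps)
  have zlow: "norm z \<ge> T / 2"
  proof -
    have "T \<le> norm z + norm (complex_of_real c)" using dz norm_triangle_ineq4[of z "complex_of_real c"] by simp
    then show ?thesis using c T by simp
  qed
  have fk: "q \<le> norm (z / complex_of_real (R k * ln 2) - 1)" if k: "k < K" for k
  proof -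
    define a where "a = R k * ln 2"
    have a: "a > 0" "a < c" using pos[OF k] lt[OF k] by (auto simp: a_def)
    have "T \<le> norm (z - a) + norm (complex_of_real a - c)"
      using dz norm_triangle_ineq[of "z - a" "complex_of_real a - c"] by simp
    also have "norm (complex_of_real a - c) = c - a"
      using a by (simp flip: of_real_diff)
    finally have za: "norm (z - a) \<ge> T / 2" using a T by simp
    have "z / complex_of_real a - 1 = (z - a) / a" using a by (simp add: field_simps)
    then have "norm (z / complex_of_real a - 1) = norm (z - a) / a" using a by (simp add: norm_divide)
    moreover have "q \<le> norm (z - a) / a"
    proof -
      have "q = (T/2) / c" by (simp add: q_def)
      also have "\<dots> \<le> norm (z - a) / a"
        by (rule frac_le) (use a za Tpos in auto)
      finally show ?thesis .
    qed
    ultimately show ?thesis by (simp add: a_def)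
  qed
  have "q ^ K \<le> (\<Prod>k<K. norm (z / complex_of_real (R k * ln 2) - 1))"
    using prod_mono[of "{..<K}" "\<lambda>_. q" "\<lambda>k. norm (z / complex_of_real (R k * ln 2) - 1)"] fk q1
    by auto
  moreover have "q \<le> q ^ K" using power_increasing[OF K1 q1] by simp
  ultimately have P: "q \<le> (\<Prod>k<K. norm (z / complex_of_real (R k * ln 2) - 1))" by linarith
  have "norm (gK_integrand K R z) = exp (Re z) / (norm z * (\<Prod>k<K. norm (z / complex_of_real (R k * ln 2) - 1)))"
    by (simp add: gK_integrand_def norm_divide norm_mult prod_norm)
  also have "\<dots> \<le> exp c / ((T / 2) * q)"
  proof (rule frac_le)
    show "0 \<le> exp c" by simp
    show "exp (Re z) \<le> exp c" using Rez by simp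
    show "0 < T / 2 * q" using Tpos q1 by simp
    show "T / 2 * q \<le> norm z * (\<Prod>k<K. norm (z / complex_of_real (R k * ln 2) - 1))"
      by (rule mult_mono) (use zlow P Tpos q1 in auto)
  qed
  also have "\<dots> = 4 * c * exp c / T^2" using c Tpos by (simp add: q_def field_simps power2_eq_square)
  finally show "norm (gK_integrand K R z) \<le> 4 * c * exp c / T^2" .
qed



theorem mainTheorem2:
  fixes K :: nat and R :: "nat \<Rightarrow> real" and c :: real
  assumes "K \<ge> 1"
    and "\<And>k. k < K \<Longrightarrow> R k > 0"
    and "inj_on R {..<K}"
    and "\<And>k. k < K \<Longrightarrow> c > R k * ln 2"
  shows "((\<lambda>T::real. contour_integral
             (linepath (complex_of_real c - \<i> * complex_of_real T)
                       (complex_of_real c + \<i> * complex_of_real T))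
             (gK_integrand K R) / (2 * complex_of_real pi * \<i>))
          \<longlongrightarrow> complex_of_real ((-1) ^ K + det (matA K R) / det (matB K R))) at_top"
proof -
  note K1 = assms(1) and pos = assms(2) and inj = assms(3) and lt = assms(4)
  define f where "f = gK_integrand K R"
  define P where "P = insert 0 ((\<lambda>k. complex_of_real (R k * ln 2)) ` {..<K})"
  define S where "S = (\<Sum>p\<in>P. residue f p)"
  have S: "S = complex_of_real ((-1) ^ K + det (matA K R) / det (matB K R))"
    unfolding S_def P_def f_def detA_div_detB[OF K1 inj] by (rule residue_sum[OF pos inj])
  have c: "c > 0"
  proof -
    have "R 0 * ln 2 > 0" using pos[of 0] K1 by simp
    then show ?thesis using lt[of 0] K1 by linarith
  qed
  have finP: "finite P" by (simp add: P_def)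
  have Pre: "Im p = 0 \<and> 0 \<le> Re p \<and> Re p < c" if "p \<in> P" for p
  proof -
    from that consider "p = 0" | k where "k < K" "p = complex_of_real (R k * ln 2)"
      unfolding P_def by blast
    then show ?thesis
    proof cases
      case 1 then show ?thesis using c by simp
    next
      case (2 k)
      have "R k * ln 2 > 0" using pos[OF 2(1)] by simp
      then show ?thesis using 2 lt[OF 2(1)] by simp
    qed
  qed
  define M where "M = Max (Re ` P)"
  have M: "M < c" unfolding M_def using finP Pre c by (subst Max_less_iff) (auto simp: P_def)
  have MP: "Re p \<le> M" if "p \<in> P" for p unfolding M_def using finP that by (intro Max_ge) auto
  define m where "m = (M + c) / 2"
  have oP: "open (UNIV - P)" using finP by (intro open_Diff finite_imp_closed) auto
  have holP: "f holomorphic_on (UNIV - P)" unfolding f_def P_def by (rule gK_holo[OF pos])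
  have holH: "f holomorphic_on {s. Re s > m}"
  proof (rule holomorphic_on_subset[OF holP])
    show "{s. Re s > m} \<subseteq> UNIV - P" using MP M by (force simp: m_def)
  qed
  have mc: "m < c" using M by (simp add: m_def)
  have inside: "norm (p - complex_of_real c) < T" if "p \<in> P" "T \<ge> 2 * c" for p T
  proof -
    have "p = complex_of_real (Re p)" using Pre[OF that(1)] by (simp add: complex_eq_iff)
    then have "norm (p - complex_of_real c) = \<bar>Re p - c\<bar>" by (metis norm_of_real of_real_diff)
    then show ?thesis using Pre[OF that(1)] that(2) c by simp
  qed
  have sph: "sphere (complex_of_real c) T \<subseteq> UNIV - P" if "T \<ge> 2 * c" for T
  proof
    fix z assume z: "z \<in> sphere (complex_of_real c) T"
    then have "norm (z - complex_of_real c) = T" by (simp add: dist_norm norm_minus_commute)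
    then have "z \<notin> P" using inside[OF _ that, of z] by auto
    then show "z \<in> UNIV - P" by simp
  qed
  have key: "contour_integral (linepath (complex_of_real c - \<i> * complex_of_real T)
                       (complex_of_real c + \<i> * complex_of_real T)) f / (2 * complex_of_real pi * \<i>)
        = S - contour_integral (part_circlepath c T (pi/2) (3/2*pi)) f / (2 * complex_of_real pi * \<i>)"
    if T: "T \<ge> 2 * c" for T
  proof -
    have Tpos: "T > 0" using T c by simp
    have pc: "path_image (circlepath c T) \<subseteq> UNIV - P"
      unfolding circlepath_def using path_image_part_circlepath_subset[of 0 "2*pi" T c] sph[OF T] Tpos by auto
    have pa: "path_image (part_circlepath c T (pi/2) (3/2*pi)) \<subseteq> UNIV - P"
      using path_image_part_circlepath_subset[of "pi/2" "3/2*pi" T c] sph[OF T] Tpos by auto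
    have ci: "f contour_integrable_on circlepath c T"
      by (rule contour_integrable_holomorphic_simple[OF holP oP valid_path_circlepath pc])
    have "contour_integral (circlepath c T) f = 2 * pi * \<i> * (\<Sum>p\<in>P. winding_number (circlepath c T) p * residue f p)"
      by (rule Residue_theorem[OF open_UNIV connected_UNIV finP holP valid_path_circlepath]) (use pc in auto)
    also have "(\<Sum>p\<in>P. winding_number (circlepath c T) p * residue f p) = S"
      unfolding S_def by (intro sum.cong refl) (simp add: winding_number_circlepath inside[OF _ T])
    finally have circ: "contour_integral (circlepath c T) f = 2 * pi * \<i> * S" .
    have "contour_integral (linepath (complex_of_real c - \<i> * complex_of_real T)
                       (complex_of_real c + \<i> * complex_of_real T)) f
        = 2 * pi * \<i> * S - contour_integral (part_circlepath c T (pi/2) (3/2*pi)) f"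
      using line_circle[OF holH mc Tpos ci] circ by simp
    then show ?thesis by (simp add: field_simps)
  qed
  have arc0: "((\<lambda>T. contour_integral (part_circlepath c T (pi/2) (3/2*pi)) f) \<longlongrightarrow> 0) at_top"
  proof (rule Lim_null_comparison)
    show "\<forall>\<^sub>F T in at_top. norm (contour_integral (part_circlepath c T (pi/2) (3/2*pi)) f)
            \<le> 4 * c * exp c / T^2 * T * (3/2*pi - pi/2)"
      using eventually_ge_at_top[of "2 * c"]
    proof eventually_elim
      case (elim T)
      have Tpos: "T > 0" using elim c by simp
      have pa: "path_image (part_circlepath c T (pi/2) (3/2*pi)) \<subseteq> UNIV - P"
        using path_image_part_circlepath_subset[of "pi/2" "3/2*pi" T c] sph[OF elim] Tpos by auto
      have ci: "f contour_integrable_on part_circlepath c T (pi/2) (3/2*pi)"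
        by (rule contour_integrable_holomorphic_simple[OF holP oP valid_path_part_circlepath pa])
      show ?case unfolding f_def by (rule arc_bound[OF pos K1 lt c elim ci[unfolded f_def]])
    qed
    show "((\<lambda>T. 4 * c * exp c / T^2 * T * (3/2*pi - pi/2)) \<longlongrightarrow> 0) at_top"
      by real_asymp
  qed
  have "((\<lambda>T. S - contour_integral (part_circlepath c T (pi/2) (3/2*pi)) f / (2 * complex_of_real pi * \<i>))
          \<longlongrightarrow> S - 0 / (2 * complex_of_real pi * \<i>)) at_top"
    by (intro tendsto_intros arc0) auto
  then have lim: "((\<lambda>T. S - contour_integral (part_circlepath c T (pi/2) (3/2*pi)) f / (2 * complex_of_real pi * \<i>))
          \<longlongrightarrow> S) at_top" by simp
  have ev: "\<forall>\<^sub>F T in at_top. S - contour_integral (part_circlepath c T (pi/2) (3/2*pi)) f / (2 * complex_of_real pi * \<i>)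
      = contour_integral (linepath (complex_of_real c - \<i> * complex_of_real T)
                       (complex_of_real c + \<i> * complex_of_real T)) f / (2 * complex_of_real pi * \<i>)"
    using eventually_ge_at_top[of "2 * c"] by eventually_elim (simp add: key)
  show ?thesis using Lim_transform_eventually[OF lim ev] unfolding S f_def .
qed


end
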